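(* Let $F$ be an abstract argumentation framework, let $\alpha_0(X,Y,Z)=X\cup Y$, and let $\beta_0(G,S)=1$ if $\mathrm{IS}^u(G)\cup\mathrm{IS}^{uc}(G)=\emptyset$ and $\beta_0(G,S)=0$ otherwise. For every $E$ with $(F,\emptyset)\leadsto^{\alpha_0,\beta_0}(F',E)$ for some $F'$: (1) $E\subseteq E'$ for some preferred extension $E'$ of $F$, and (2) $E_{id}\subseteq E$, where $E_{id}$ is the ideal extension of $F$.
   Context: An abstract argumentation framework (AF) is a pair $F=(A,R)$ with $A$ a finite set of arguments and $R\subseteq A\times A$ ($a\to b$ means $(a,b)\in R$). For $S\subseteq A$: $S^+=\{a\mid \exists b\in S: b\to a\}$, $S^-=\{a\mid\exists b\in S: a\to b\}$; for sets $S,S'$, $S\to S'$ means $S^+\cap S'\neq\emptyset$. $S$ is admissible if it is conflict-free and every attacker of an element of $S$ is attacked by some element of $S$. A preferred extension is an inclusion-maximal admissible set; the ideal extension is the inclusion-maximal admissible set contained in every preferred extension. An initial set is a non-empty admissible set with no non-empty admissible proper subset; $\mathrm{IS}(G)$ is the set of initial sets of $G$. An initial set $S$ is unattacked if $S^-=\emptyset$; unchallenged if $S^-\neq\emptyset$ and no $S'\in\mathrm{IS}(G)$ has $S'\to S$; challenged if some $S'\in\mathrm{IS}(G)$ has $S'\to S$. Write $\mathrm{IS}^{u}(G),\mathrm{IS}^{uc}(G),\mathrm{IS}^{c}(G)$ for these sets. The reduct is $G^S=(A',R\cap(A'\times A'))$ with $A'=A\setminus(S\cup S^+)$. Given a selection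 function $\alpha$ (mapping three sets $X,Y,Z$ of sets of arguments to a subset of $X\cup Y\cup Z$), transitions are $(G,S)\to(G^{S'},S\cup S')$ whenever $S'\in\alpha(\mathrm{IS}^u(G),\mathrm{IS}^{uc}(G),\mathrm{IS}^c(G))$. For a termination function $\beta$ (mapping pairs (AF, set) to $\{0,1\}$), $(F,S)\leadsto^{\alpha,\beta}(F',S')$ means $(F',S')$ is reachable from $(F,S)$ in finitely many (possibly zero) transitions and $\beta(F',S')=1$. *)

theory Defs
  imports Main
begin

type_synonym 'a af = "'a set \<times> ('a \<times> 'a) set"

definition AF :: "'a af \<Rightarrow> bool" where
  "AF F \<longleftrightarrow> finite (fst F) \<and> snd F \<subseteq> fst F \<times> fst F"

definition args :: "'a af \<Rightarrow> 'a set" where "args F = fst F"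
definition att :: "'a af \<Rightarrow> ('a \<times> 'a) set" where "att F = snd F"

definition plus :: "'a af \<Rightarrow> 'a set \<Rightarrow> 'a set" where
  "plus F S = {a. \<exists>b\<in>S. (b, a) \<in> att F}"

definition minus :: "'a af \<Rightarrow> 'a set \<Rightarrow> 'a set" where
  "minus F S = {a. \<exists>b\<in>S. (a, b) \<in> att F}"

definition attacks_set :: "'a af \<Rightarrow> 'a set \<Rightarrow> 'a set \<Rightarrow> bool" where
  "attacks_set F S S' \<longleftrightarrow> plus F S \<inter> S' \<noteq> {}"

definition conflict_free :: "'a af \<Rightarrow> 'a set \<Rightarrow> bool" where
  "conflict_free F S \<longleftrightarrow> (\<forall>a\<in>S. \<forall>b\<in>S. (a, b) \<notin> att F)"

definition admissible :: "'a af \<Rightarrow> 'a set \<Rightarrow> bool" where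
  "admissible F S \<longleftrightarrow> S \<subseteq> args F \<and> conflict_free F S \<and>
     (\<forall>a\<in>S. \<forall>b. (b, a) \<in> att F \<longrightarrow> (\<exists>c\<in>S. (c, b) \<in> att F))"

definition preferred :: "'a af \<Rightarrow> 'a set \<Rightarrow> bool" where
  "preferred F S \<longleftrightarrow> admissible F S \<and> (\<forall>T. admissible F T \<and> S \<subseteq> T \<longrightarrow> T = S)"

definition ideal_ext :: "'a af \<Rightarrow> 'a set \<Rightarrow> bool" where
  "ideal_ext F S \<longleftrightarrow> admissible F S \<and> (\<forall>P. preferred F P \<longrightarrow> S \<subseteq> P) \<and>
     (\<forall>T. admissible F T \<and> (\<forall>P. preferred F P \<longrightarrow> T \<subseteq> P) \<and> S \<subseteq> T \<longrightarrow> T = S)"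

definition initial :: "'a af \<Rightarrow> 'a set \<Rightarrow> bool" where
  "initial F S \<longleftrightarrow> S \<noteq> {} \<and> admissible F S \<and>
     (\<forall>T. T \<noteq> {} \<and> T \<subset> S \<longrightarrow> \<not> admissible F T)"

definition IS :: "'a af \<Rightarrow> 'a set set" where
  "IS F = {S. initial F S}"

definition IS_u :: "'a af \<Rightarrow> 'a set set" where
  "IS_u F = {S \<in> IS F. minus F S = {}}"

definition IS_uc :: "'a af \<Rightarrow> 'a set set" where
  "IS_uc F = {S \<in> IS F. minus F S \<noteq> {} \<and> \<not> (\<exists>S'\<in>IS F. attacks_set F S' S)}"

definition IS_c :: "'a af \<Rightarrow> 'a set set" where
  "IS_c F = {S \<in> IS F. \<exists>S'\<in>IS F. attacks_set F S' S}"

definition reduct :: "'a af \<Rightarrow> 'a set \<Rightarrow> 'a af" where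
  "reduct F S = (let A' = args F - (S \<union> plus F S) in (A', att F \<inter> (A' \<times> A')))"

definition trans_step ::
  "('a set set \<Rightarrow> 'a set set \<Rightarrow> 'a set set \<Rightarrow> 'a set set)
   \<Rightarrow> ('a af \<times> 'a set) \<Rightarrow> ('a af \<times> 'a set) \<Rightarrow> bool" where
  "trans_step \<alpha> c c' \<longleftrightarrow> (\<exists>G S S'. c = (G, S) \<and>
      S' \<in> \<alpha> (IS_u G) (IS_uc G) (IS_c G) \<and> c' = (reduct G S', S \<union> S'))"

definition leadsto ::
  "('a set set \<Rightarrow> 'a set set \<Rightarrow> 'a set set \<Rightarrow> 'a set set)
   \<Rightarrow> ('a af \<Rightarrow> 'a set \<Rightarrow> bool)
   \<Rightarrow> 'a af \<Rightarrow> 'a set \<Rightarrow> 'a af \<Rightarrow> 'a set \<Rightarrow> bool" where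
  "leadsto \<alpha> \<beta> F S F' S' \<longleftrightarrow> (trans_step \<alpha>)\<^sup>*\<^sup>* (F, S) (F', S') \<and> \<beta> F' S'"

definition alpha0 :: "'a set set \<Rightarrow> 'a set set \<Rightarrow> 'a set set \<Rightarrow> 'a set set" where
  "alpha0 X Y Z = X \<union> Y"

definition beta0 :: "'a af \<Rightarrow> 'a set \<Rightarrow> bool" where
  "beta0 G S \<longleftrightarrow> IS_u G \<union> IS_uc G = {}"

end

theory Submission
  imports Defs
begin

lemma red_args: "args (reduct F S) = args F - (S \<union> plus F S)"
  by (simp add: reduct_def args_def Let_def)

lemma red_att: "att (reduct F S) = att F \<inter> ((args F - (S \<union> plus F S)) \<times> (args F - (S \<union> plus F S)))"
  by (simp add: reduct_def att_def args_def Let_def)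

lemma adm_union:
  assumes "AF F" "admissible F S" "admissible (reduct F S) S'"
  shows "admissible F (S \<union> S')"
proof -
  let ?A = "args F - (S \<union> plus F S)"
  have RA: "att F \<subseteq> args F \<times> args F" using assms(1) by (simp add: AF_def att_def args_def)
  have S'A: "S' \<subseteq> ?A" using assms(3) by (simp add: admissible_def red_args)
  have cf': "\<forall>a\<in>S'. \<forall>b\<in>S'. (a, b) \<notin> att F"
    using assms(3) S'A unfolding admissible_def conflict_free_def red_att by blast
  have SA: "S \<subseteq> args F" and cfS: "conflict_free F S"
    and defS: "\<forall>a\<in>S. \<forall>b. (b, a) \<in> att F \<longrightarrow> (\<exists>c\<in>S. (c, b) \<in> att F)"
    using assms(2) by (auto simp: admissible_def)
  have def': "\<forall>a\<in>S'. \<forall>b. (b, a) \<in> att (reduct F S) \<longrightarrow> (\<exists>c\<in>S'. (c, b) \<in> att (reduct F S))"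
    using assms(3) by (auto simp: admissible_def)
  have cf: "conflict_free F (S \<union> S')"
    unfolding conflict_free_def
  proof (intro ballI)
    fix a b assume a: "a \<in> S \<union> S'" and b: "b \<in> S \<union> S'"
    show "(a, b) \<notin> att F"
    proof
      assume ab: "(a, b) \<in> att F"
      show False
      proof (cases "a \<in> S")
        case True
        then show False using b ab cfS S'A unfolding conflict_free_def plus_def by blast
      next
        case False
        then have aS': "a \<in> S'" using a by blast
        show False
        proof (cases "b \<in> S")
          case True
          then obtain c where "c \<in> S" "(c, a) \<in> att F" using defS ab by blast
          then show False using aS' S'A unfolding plus_def by blast
        next
          case False
          then show False using aS' b ab cf' by blast
        qed
      qed
    qed
  qed
  have "\<forall>a\<in>S \<union> S'. \<forall>b. (b, a) \<in> att F \<longrightarrow> (\<exists>c\<in>S \<union> S'. (c, b) \<in> att F)"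
  proof (intro ballI allI impI)
    fix a b assume a: "a \<in> S \<union> S'" and ba: "(b, a) \<in> att F"
    show "\<exists>c\<in>S \<union> S'. (c, b) \<in> att F"
    proof (cases "a \<in> S")
      case True then show ?thesis using defS ba by blast
    next
      case False
      then have aS': "a \<in> S'" using a by blast
      show ?thesis
      proof (cases "b \<in> plus F S")
        case True then show ?thesis unfolding plus_def by blast
      next
        case False
        have "b \<notin> S" using aS' ba S'A unfolding plus_def by blast
        moreover have "b \<in> args F" using ba RA by blast
        moreover have "a \<in> args F - (S \<union> plus F S)" using aS' S'A by blast
        ultimately have "(b, a) \<in> att (reduct F S)" using False ba unfolding red_att by simp
        then obtain c where "c \<in> S'" "(c, b) \<in> att (reduct F S)" using def' aS' by blast
        then show ?thesis unfolding red_att by blast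
      qed
    qed
  qed
  then show ?thesis using cf SA S'A unfolding admissible_def by blast
qed

lemma red_red:
  assumes "S' \<subseteq> args (reduct F S)"
  shows "reduct (reduct F S) S' = reduct F (S \<union> S')"
proof -
  let ?A = "args F - (S \<union> plus F S)"
  let ?B = "args F - ((S \<union> S') \<union> plus F (S \<union> S'))"
  have S'A: "S' \<subseteq> ?A" using assms by (simp add: red_args)
  have eq: "?A - (S' \<union> plus (reduct F S) S') = ?B"
  proof
    show "?A - (S' \<union> plus (reduct F S) S') \<subseteq> ?B"
      using S'A unfolding plus_def red_att by auto blast
    show "?B \<subseteq> ?A - (S' \<union> plus (reduct F S) S')"
      by (auto simp: plus_def red_att)
  qed
  have "reduct (reduct F S) S' = (?A - (S' \<union> plus (reduct F S) S'),
     att (reduct F S) \<inter> ((?A - (S' \<union> plus (reduct F S) S')) \<times> (?A - (S' \<union> plus (reduct F S) S'))))"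
    by (simp add: reduct_def[of "reduct F S"] red_args Let_def)
  also have "... = (?B, att F \<inter> (?B \<times> ?B))"
    unfolding eq red_att by (auto simp: plus_def)
  also have "... = reduct F (S \<union> S')"
    by (simp add: reduct_def[of F] Let_def)
  finally show ?thesis .
qed

lemma pref_exists:
  assumes "AF F" "admissible F S"
  shows "\<exists>P. preferred F P \<and> S \<subseteq> P"
proof -
  have fin: "finite (args F)" using assms(1) by (simp add: AF_def args_def)
  let ?C = "{T. admissible F T \<and> S \<subseteq> T}"
  have sub: "?C \<subseteq> Pow (args F)" by (auto simp: admissible_def)
  have finC: "finite ?C" using fin sub finite_subset by blast
  have ne: "?C \<noteq> {}" using assms(2) by blast
  obtain P where P: "P \<in> ?C" and max: "\<forall>T\<in>?C. P \<subseteq> T \<longrightarrow> P = T"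
    using finite_has_maximal[OF finC ne] by blast
  have "preferred F P"
    unfolding preferred_def
  proof (intro conjI allI impI)
    show "admissible F P" using P by blast
    fix T assume T: "admissible F T \<and> P \<subseteq> T"
    then have "T \<in> ?C" using P by blast
    then show "T = P" using max T by blast
  qed
  then show ?thesis using P by blast
qed

lemma initial_exists:
  assumes "finite J" "admissible G J" "J \<noteq> {}"
  shows "\<exists>K. initial G K \<and> K \<subseteq> J"
  using assms
proof (induction "card J" arbitrary: J rule: less_induct)
  case less
  show ?case
  proof (cases "initial G J")
    case True then show ?thesis by blast
  next
    case False
    then obtain T where T: "T \<noteq> {}" "T \<subset> J" "admissible G T"
      using less.prems unfolding initial_def by blast
    then have "card T < card J" using less.prems(1) by (simp add: psubset_card_mono)
    then obtain K where "initial G K" "K \<subseteq> T"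
      using less.hyps[of T] T less.prems(1) by (meson finite_subset psubset_imp_subset)
    then show ?thesis using T by blast
  qed
qed

lemma invariant:
  assumes "AF F" "(trans_step alpha0)\<^sup>*\<^sup>* (F, {}) c"
  shows "fst c = reduct F (snd c) \<and> admissible F (snd c)"
  using assms(2)
proof (induction rule: rtranclp_induct)
  case base
  have "reduct F {} = F" using assms(1)
    by (cases F) (auto simp: reduct_def AF_def args_def att_def plus_def Let_def)
  moreover have "admissible F {}" by (simp add: admissible_def conflict_free_def)
  ultimately show ?case by simp
next
  case (step y z)
  then obtain G S S' where y: "y = (G, S)" and S': "S' \<in> alpha0 (IS_u G) (IS_uc G) (IS_c G)"
    and z: "z = (reduct G S', S \<union> S')" unfolding trans_step_def by blast
  have G: "G = reduct F S" and adm: "admissible F S" using step.IH y by auto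
  have "S' \<in> IS G" using S' by (auto simp: alpha0_def IS_u_def IS_uc_def)
  then have adm': "admissible (reduct F S) S'" using G by (simp add: IS_def initial_def)
  have "S' \<subseteq> args (reduct F S)" using adm' by (simp add: admissible_def)
  then have "reduct G S' = reduct F (S \<union> S')" using G red_red by blast
  moreover have "admissible F (S \<union> S')" using adm_union[OF assms(1) adm adm'] .
  ultimately show ?case using z by simp
qed

theorem theorem10:
  fixes F F' :: "'a af" and E Eid :: "'a set"
  assumes "AF F"
    and "leadsto alpha0 beta0 F {} F' E"
    and "ideal_ext F Eid"
  shows "(\<exists>E'. preferred F E' \<and> E \<subseteq> E') \<and> Eid \<subseteq> E"
proof -
  have reach: "(trans_step alpha0)\<^sup>*\<^sup>* (F, {}) (F', E)" and b: "beta0 F' E"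
    using assms(2) by (auto simp: leadsto_def)
  from invariant[OF assms(1) reach] have G: "F' = reduct F E" and admE: "admissible F E" by auto
  have part1: "\<exists>E'. preferred F E' \<and> E \<subseteq> E'" using pref_exists[OF assms(1) admE] .
  have admI: "admissible F Eid" and inP: "\<forall>P. preferred F P \<longrightarrow> Eid \<subseteq> P"
    using assms(3) by (auto simp: ideal_ext_def)
  have fin: "finite (args F)" using assms(1) by (simp add: AF_def args_def)
  have "Eid \<subseteq> E"
  proof (rule ccontr)
    assume nsub: "\<not> Eid \<subseteq> E"
    let ?J = "Eid - E"
    let ?A = "args F - (E \<union> plus F E)"
    obtain P where P: "preferred F P" "E \<subseteq> P" using part1 by blast
    have IP: "Eid \<subseteq> P" using inP P by blast
    have cfP: "conflict_free F P" using P by (simp add: preferred_def admissible_def)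
    have JA: "?J \<subseteq> ?A"
      using admI IP P(2) cfP unfolding admissible_def conflict_free_def plus_def by blast
    have defI: "\<forall>a\<in>Eid. \<forall>b. (b, a) \<in> att F \<longrightarrow> (\<exists>c\<in>Eid. (c, b) \<in> att F)"
      using admI by (simp add: admissible_def)
    have admJ: "admissible F' ?J"
      unfolding admissible_def G red_args conflict_free_def
    proof (intro conjI ballI allI impI)
      show "?J \<subseteq> ?A" using JA .
      fix a b assume "a \<in> ?J" "b \<in> ?J"
      then show "(a, b) \<notin> att (reduct F E)"
        using admI unfolding red_att admissible_def conflict_free_def by blast
    next
      fix a b assume a: "a \<in> ?J" and ba: "(b, a) \<in> att (reduct F E)"
      then have ba': "(b, a) \<in> att F" and bA: "b \<in> ?A" unfolding red_att by auto
      then obtain c where c: "c \<in> Eid" "(c, b) \<in> att F" using defI a by blast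
      have "c \<notin> E" using c bA unfolding plus_def by blast
      then have "c \<in> ?J" using c by blast
      then show "\<exists>c\<in>?J. (c, b) \<in> att (reduct F E)"
        using c bA JA unfolding red_att by blast
    qed
    have "finite ?J" using JA fin by (meson finite_Diff finite_subset)
    then obtain K where K: "initial F' K" "K \<subseteq> ?J"
      using initial_exists admJ nsub by blast
    have KIS: "K \<in> IS F'" using K by (simp add: IS_def)
    have "\<not> (\<exists>K'\<in>IS F'. attacks_set F' K' K)"
    proof
      assume "\<exists>K'\<in>IS F'. attacks_set F' K' K"
      then obtain K' x y where K': "K' \<in> IS F'" and xy: "x \<in> K'" "y \<in> K" "(x, y) \<in> att F'"
        unfolding attacks_set_def plus_def by blast
      have "admissible (reduct F E) K'" using K' G by (simp add: IS_def initial_def)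
      then have "admissible F (E \<union> K')" using adm_union[OF assms(1) admE] by blast
      then obtain P' where P': "preferred F P'" "E \<union> K' \<subseteq> P'" using pref_exists[OF assms(1)] by blast
      have "Eid \<subseteq> P'" using inP P' by blast
      moreover have "conflict_free F P'" using P' by (simp add: preferred_def admissible_def)
      moreover have "(x, y) \<in> att F" using xy(3) unfolding G red_att by blast
      ultimately show False using xy K P' unfolding conflict_free_def by blast
    qed
    then have "K \<in> IS_u F' \<union> IS_uc F'" using KIS by (auto simp: IS_u_def IS_uc_def)
    then show False using b by (simp add: beta0_def)
  qed
  then show ?thesis using part1 by blast
qed

end
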